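(* Let $n=1$ and let $e^1,\dots,e^m$ be $C^\infty$ functions of $(x,w^{j'},w^{j'}_1,w^{j'}_2)$ (second-order data), defined on the whole corresponding Euclidean space. If there exists a Lagrange function $f$ of some finite order with $e^j=e^j[f]$ for all $j=1,\dots,m$, then each $e^j$ is affine in the second-order variables, $e^j=F^j-\sum_{j'}F^{jj'}w^{j'}_2$ with $F^j,F^{jj'}$ functions of $(x,w,w_1)$ and $F^{jj'}=F^{j'j}$, and there exists a first-order Lagrange function $g(x,w,w_1)$ with $e^j[g]=e^j$ for all $j$.
   Context: One independent variable $x$, dependent variables $w^1,\dots,w^m$; jet coordinates $w^j_r$ ($r\ge0$, $w^j_0=w^j$) standing for $d^rw^j/dx^r$. A Lagrange function is a $C^\infty$ function of $x$ and finitely many $w^j_r$, defined on the whole corresponding Euclidean space. $\frac{d}{dx}=\partial_x+\sum_{j,r}w^j_{r+1}\partial_{w^j_r}$ and $e^j[f]=\sum_r(-1)^r\frac{d^r}{dx^r}\frac{\partial f}{\partial w^j_r}$. *)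

theory Defs
  imports "HOL-Analysis.Analysis" "HOL-Library.Groups_Big_Fun"
begin

text \<open>Jet coordinates: the independent variable x and w^j_r (j-th dependent
variable, r-th derivative). Dependent variables are indexed j = 0..m-1.
A point of the (infinite) jet space is a map from coordinates to reals;
it carries the product topology.\<close>

datatype jvar = X | W nat nat

type_synonym jpt = "jvar \<Rightarrow> real"

definition pd :: "jvar \<Rightarrow> (jpt \<Rightarrow> real) \<Rightarrow> jpt \<Rightarrow> real" where
  "pd v F p = deriv (\<lambda>t. F (p(v := t))) (p v)"

definition iter_pd :: "jvar list \<Rightarrow> (jpt \<Rightarrow> real) \<Rightarrow> jpt \<Rightarrow> real" where
  "iter_pd vs F = foldr pd vs F"

definition depends_only :: "jvar set \<Rightarrow> (jpt \<Rightarrow> real) \<Rightarrow> bool" where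
  "depends_only S F \<longleftrightarrow> (\<forall>p q. (\<forall>v\<in>S. p v = q v) \<longrightarrow> F p = F q)"

definition smooth :: "(jpt \<Rightarrow> real) \<Rightarrow> bool" where
  "smooth F \<longleftrightarrow> (\<forall>vs. continuous_on UNIV (iter_pd vs F) \<and>
      (\<forall>v p. (\<lambda>t. iter_pd vs F (p(v := t))) differentiable (at (p v))))"

definition vars_upto :: "nat \<Rightarrow> nat \<Rightarrow> jvar set" where
  "vars_upto m k = insert X {W j r | j r. j < m \<and> r \<le> k}"

definition lagrange :: "nat \<Rightarrow> (jpt \<Rightarrow> real) \<Rightarrow> bool" where
  "lagrange m F \<longleftrightarrow> smooth F \<and> (\<exists>k. depends_only (vars_upto m k) F)"

text \<open>Total derivative d/dx = \<partial>_x + \<Sum>_{j,r} w^j_{r+1} \<partial>_{w^j_r}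
  (a finite sum for functions of finite order).\<close>
definition Dx :: "nat \<Rightarrow> (jpt \<Rightarrow> real) \<Rightarrow> jpt \<Rightarrow> real" where
  "Dx m F p = pd X F p +
     Sum_any (\<lambda>jr::nat\<times>nat. (if fst jr < m then p (W (fst jr) (Suc (snd jr))) * pd (W (fst jr) (snd jr)) F p else 0))"

definition euler :: "nat \<Rightarrow> nat \<Rightarrow> (jpt \<Rightarrow> real) \<Rightarrow> jpt \<Rightarrow> real" where
  "euler m j F p = Sum_any (\<lambda>r::nat. (-1) ^ r * (Dx m ^^ r) (pd (W j r) F) p)"

end

theory Submission
  imports Defs
begin

lemma iter_pd_Nil[simp]: "iter_pd [] F = F" by (simp add: iter_pd_def)
lemma iter_pd_Cons[simp]: "iter_pd (v#vs) F = pd v (iter_pd vs F)" by (simp add: iter_pd_def)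
lemma iter_pd_append: "iter_pd (vs @ ws) F = iter_pd vs (iter_pd ws F)" by (simp add: iter_pd_def)
lemma iter_pd_snoc: "iter_pd (vs @ [v]) F = iter_pd vs (pd v F)" by (simp add: iter_pd_append)

definition C1 :: "(jpt \<Rightarrow> real) \<Rightarrow> bool" where
  "C1 F \<longleftrightarrow> continuous_on UNIV F \<and> (\<forall>v p. (\<lambda>t. F (p(v := t))) differentiable (at (p v)))"

lemma smooth_iff_C1: "smooth F \<longleftrightarrow> (\<forall>vs. C1 (iter_pd vs F))"
  by (simp add: smooth_def C1_def)

lemma smooth_pd: "smooth F \<Longrightarrow> smooth (pd v F)"
  unfolding smooth_iff_C1 by (metis iter_pd_snoc)

lemma smooth_C1: "smooth F \<Longrightarrow> C1 F"
  unfolding smooth_iff_C1 by (metis iter_pd_Nil)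

lemma smooth_coind:
  assumes "\<And>H. H \<in> K \<Longrightarrow> C1 H" "\<And>H v. H \<in> K \<Longrightarrow> pd v H \<in> K" "H \<in> K"
  shows "smooth H"
proof -
  have "\<forall>H\<in>K. C1 (iter_pd vs H)" for vs
  proof (induction vs rule: rev_induct)
    case Nil then show ?case using assms(1) by simp
  next
    case (snoc v vs) then show ?case using assms(2) by (simp add: iter_pd_snoc)
  qed
  then show ?thesis using assms(3) smooth_iff_C1 by blast
qed

lemma C1_deriv:
  assumes "C1 F"
  shows "((\<lambda>t. F (p(v:=t))) has_real_derivative pd v F (p(v:=x))) (at x)"
proof -
  have "(\<lambda>t. F ((p(v:=x))(v:=t))) differentiable (at ((p(v:=x)) v))"
    using assms C1_def by blast
  then show ?thesis by (simp add: pd_def DERIV_deriv_iff_real_differentiable)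
qed

lemma C1_deriv': "C1 F \<Longrightarrow> ((\<lambda>t. F (p(v:=t))) has_real_derivative pd v F p) (at (p v))"
  using C1_deriv[of F p v "p v"] by simp

lemma pd_eqI:
  assumes "\<And>p. ((\<lambda>t. F (p(v:=t))) has_real_derivative D p) (at (p v))"
  shows "pd v F = D"
  using assms by (auto simp: pd_def fun_eq_iff intro: DERIV_imp_deriv)

lemma C1_intro:
  assumes "continuous_on UNIV F" "\<And>v p. ((\<lambda>t. F (p(v:=t))) has_real_derivative D v p) (at (p v))"
  shows "C1 F"
  using assms unfolding C1_def by (meson real_differentiable_def)


lemma cont_upd: "continuous_on UNIV (\<lambda>t::real. (p::jpt)(v := t))"
  apply (rule continuous_on_coordinatewise_then_product)
  subgoal for i by (cases "i = v") (auto intro: continuous_intros)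
  done

lemma C1_const: "C1 (\<lambda>p. c)"
  by (rule C1_intro[where D="\<lambda>v p. 0"]) (auto intro!: derivative_eq_intros)

lemma pd_const[simp]: "pd v (\<lambda>p. c) = (\<lambda>p. 0)"
  by (rule pd_eqI) (auto intro!: derivative_eq_intros)

lemma smooth_const[simp]: "smooth (\<lambda>p. c)"
  by (rule smooth_coind[where K="range (\<lambda>c::real. \<lambda>p::jpt. c)"]) (auto intro: C1_const)

lemma coord_deriv: "((\<lambda>t. (p(v := t)) w) has_real_derivative (if v = w then 1 else 0)) (at x)"
  by (cases "v = w") (auto intro!: derivative_eq_intros)

lemma pd_coord: "pd v (\<lambda>p::jpt. p w) = (\<lambda>p. if v = w then 1 else 0)"
  by (rule pd_eqI) (rule coord_deriv)

lemma smooth_coord[simp]: "smooth (\<lambda>p::jpt. p w)"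
proof (rule smooth_coind[where K="insert (\<lambda>p::jpt. p w) (range (\<lambda>c::real. \<lambda>p::jpt. c))"])
  fix H assume "H \<in> insert (\<lambda>p::jpt. p w) (range (\<lambda>c::real. \<lambda>p::jpt. c))"
  then show "C1 H"
    by (auto intro: C1_const C1_intro[where D="\<lambda>v p. if v = w then 1 else 0"] coord_deriv)
next
  fix H v assume "H \<in> insert (\<lambda>p::jpt. p w) (range (\<lambda>c::real. \<lambda>p::jpt. c))"
  then show "pd v H \<in> insert (\<lambda>p::jpt. p w) (range (\<lambda>c::real. \<lambda>p::jpt. c))"
    by (auto simp: pd_coord)
qed auto

definition SP :: "(jpt \<Rightarrow> real) set" where
  "SP = {H. \<exists>(n::nat) F G. (\<forall>i<n. smooth (F i) \<and> smooth (G i)) \<and> H = (\<lambda>p. \<Sum>i<n. F i p * G i p)}"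

lemma SP_deriv:
  fixes n :: nat and F G :: "nat \<Rightarrow> jpt \<Rightarrow> real"
  assumes "\<forall>i<n. smooth (F i) \<and> smooth (G i)"
  shows "((\<lambda>t. \<Sum>i<n. F i (p(v:=t)) * G i (p(v:=t))) has_real_derivative
     (\<Sum>i<n. pd v (F i) (p(v:=x)) * G i (p(v:=x)) + F i (p(v:=x)) * pd v (G i) (p(v:=x)))) (at x)"
proof (rule DERIV_sum)
  fix i assume "i \<in> {..<n}"
  then have "C1 (F i)" "C1 (G i)" using assms smooth_C1 by auto
  then show "((\<lambda>t. F i (p(v:=t)) * G i (p(v:=t))) has_real_derivative
     pd v (F i) (p(v:=x)) * G i (p(v:=x)) + F i (p(v:=x)) * pd v (G i) (p(v:=x))) (at x)"
    using DERIV_mult[OF C1_deriv[OF \<open>C1 (F i)\<close>] C1_deriv[OF \<open>C1 (G i)\<close>]] by (simp add: mult.commute)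
qed

lemma SP_C1: "H \<in> SP \<Longrightarrow> C1 H"
proof -
  assume "H \<in> SP"
  then obtain n :: nat and F G :: "nat \<Rightarrow> jpt \<Rightarrow> real" where FG: "\<forall>i<n. smooth (F i) \<and> smooth (G i)" and H: "H = (\<lambda>p. \<Sum>i<n. F i p * G i p)"
    unfolding SP_def by blast
  have c: "continuous_on UNIV (F i)" "continuous_on UNIV (G i)" if "i < n" for i
    using FG that smooth_C1 C1_def by blast+
  show "C1 H" unfolding H
  proof (rule C1_intro)
    show "continuous_on UNIV (\<lambda>p. \<Sum>i<n. F i p * G i p)"
      by (intro continuous_on_sum continuous_on_mult) (use c in auto)
    fix v p
    show "((\<lambda>t. \<Sum>i<n. F i (p(v:=t)) * G i (p(v:=t))) has_real_derivative
       (\<Sum>i<n. pd v (F i) p * G i p + F i p * pd v (G i) p)) (at (p v))"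
      using SP_deriv[OF FG, of p v "p v"] by simp
  qed
qed

lemma SP_pd:
  fixes n :: nat and F G :: "nat \<Rightarrow> jpt \<Rightarrow> real"
  assumes "\<forall>i<n. smooth (F i) \<and> smooth (G i)"
  shows "pd v (\<lambda>p. \<Sum>i<n. F i p * G i p) = (\<lambda>p. \<Sum>i<n. pd v (F i) p * G i p + F i p * pd v (G i) p)"
proof (rule pd_eqI)
  fix p
  show "((\<lambda>t. \<Sum>i<n. F i (p(v:=t)) * G i (p(v:=t))) has_real_derivative
       (\<Sum>i<n. pd v (F i) p * G i p + F i p * pd v (G i) p)) (at (p v))"
      using SP_deriv[OF assms, of p v "p v"] by simp
qed

lemma SP_pd_mem: "H \<in> SP \<Longrightarrow> pd v H \<in> SP"
proof -
  assume "H \<in> SP"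
  then obtain n :: nat and F G :: "nat \<Rightarrow> jpt \<Rightarrow> real" where FG: "\<forall>i<n. smooth (F i) \<and> smooth (G i)" and H: "H = (\<lambda>p. \<Sum>i<n. F i p * G i p)"
    unfolding SP_def by blast
  define F' where "F' i = (if i < n then pd v (F i) else F (i - n))" for i
  define G' where "G' i = (if i < n then G i else pd v (G (i - n)))" for i
  have "\<forall>i<2*n. smooth (F' i) \<and> smooth (G' i)"
    using FG by (auto simp: F'_def G'_def smooth_pd)
  moreover have "pd v H = (\<lambda>p. \<Sum>i<2*n. F' i p * G' i p)"
  proof -
    have "(\<Sum>i<2*n. F' i p * G' i p) = (\<Sum>i<n. F' i p * G' i p) + (\<Sum>i\<in>{n..<2*n}. F' i p * G' i p)" for p
      by (metis (no_types) atLeast0LessThan le_add2 mult_2 sum.atLeastLessThan_concat zero_le)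
    moreover have "(\<Sum>i\<in>{n..<2*n}. F' i p * G' i p) = (\<Sum>i<n. F i p * pd v (G i) p)" for p
    proof -
      have "(\<Sum>i\<in>{n..<2*n}. F' i p * G' i p) = (\<Sum>i<n. F' (i+n) p * G' (i+n) p)"
        by (rule sum.reindex_bij_witness[where j="\<lambda>i. i - n" and i="\<lambda>i. i + n"]) auto
      then show ?thesis by (simp add: F'_def G'_def)
    qed
    ultimately show ?thesis
      unfolding H SP_pd[OF FG] by (simp add: F'_def G'_def sum.distrib)
  qed
  ultimately show "pd v H \<in> SP" unfolding SP_def by blast
qed

lemma SP_smooth: "H \<in> SP \<Longrightarrow> smooth H"
  by (rule smooth_coind[where K=SP]) (auto intro: SP_C1 SP_pd_mem)

lemma SP_single: "smooth F \<Longrightarrow> smooth G \<Longrightarrow> (\<lambda>p. F p * G p) \<in> SP"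
  unfolding SP_def by (rule CollectI, rule exI[of _ 1], rule exI[of _ "\<lambda>_. F"], rule exI[of _ "\<lambda>_. G"]) auto

lemma smooth_mult: "smooth F \<Longrightarrow> smooth G \<Longrightarrow> smooth (\<lambda>p. F p * G p)"
  by (rule SP_smooth, rule SP_single)

lemma smooth_add:
  assumes "smooth F" "smooth G" shows "smooth (\<lambda>p. F p + G p)"
proof -
  define F' where "F' i = (if i = 0 then F else G)" for i :: nat
  have "(\<lambda>p. F p + G p) = (\<lambda>p. \<Sum>i<2. F' i p * 1)" by (simp add: F'_def numeral_2_eq_2)
  moreover have "(\<lambda>p. \<Sum>i<2. F' i p * 1) \<in> SP"
  proof -
    have h: "\<forall>i<(2::nat). smooth (F' i) \<and> smooth ((\<lambda>_ (_::jpt). 1::real) i)" using assms by (auto simp: F'_def)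
    show ?thesis unfolding SP_def mem_Collect_eq
      apply (rule exI[of _ "2::nat"], rule exI[of _ F'], rule exI[of _ "\<lambda>(_::nat) (_::jpt). 1::real"])
      using h by simp
  qed
  ultimately show ?thesis using SP_smooth by metis
qed

lemma smooth_scale: "smooth F \<Longrightarrow> smooth (\<lambda>p. c * F p)"
  by (rule smooth_mult[OF smooth_const])

lemma smooth_minus: "smooth F \<Longrightarrow> smooth G \<Longrightarrow> smooth (\<lambda>p. F p - G p)"
proof -
  assume "smooth F" "smooth G"
  then have "smooth (\<lambda>p. F p + (-1) * G p)" by (rule smooth_add[OF _ smooth_scale])
  moreover have "(\<lambda>p. F p + (-1) * G p) = (\<lambda>p. F p - G p)" by (simp add: fun_eq_iff)
  ultimately show ?thesis by metis
qed

lemma smooth_sum: "(\<And>i. i \<in> A \<Longrightarrow> smooth (F i)) \<Longrightarrow> smooth (\<lambda>p. \<Sum>i\<in>A. F i p)"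
proof (induction A rule: infinite_finite_induct)
  case (insert x A)
  have "smooth (\<lambda>p. F x p + (\<Sum>i\<in>A. F i p))" by (rule smooth_add) (use insert in auto)
  then show ?case using insert by simp
qed auto

lemma smooth_eta: "smooth F \<Longrightarrow> smooth (\<lambda>p. F p)" by simp

lemma pd_add: "C1 F \<Longrightarrow> C1 G \<Longrightarrow> pd v (\<lambda>p. F p + G p) = (\<lambda>p. pd v F p + pd v G p)"
  by (rule pd_eqI) (auto intro!: DERIV_add C1_deriv')

lemma pd_diff: "C1 F \<Longrightarrow> C1 G \<Longrightarrow> pd v (\<lambda>p. F p - G p) = (\<lambda>p. pd v F p - pd v G p)"
  by (rule pd_eqI) (auto intro!: DERIV_diff C1_deriv')

lemma pd_mult: "C1 F \<Longrightarrow> C1 G \<Longrightarrow> pd v (\<lambda>p. F p * G p) = (\<lambda>p. pd v F p * G p + F p * pd v G p)"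
proof (rule pd_eqI)
  fix p assume "C1 F" "C1 G"
  show "((\<lambda>t. F (p(v:=t)) * G (p(v:=t))) has_real_derivative pd v F p * G p + F p * pd v G p) (at (p v))"
    using DERIV_mult[OF C1_deriv'[OF \<open>C1 F\<close>] C1_deriv'[OF \<open>C1 G\<close>], of p v p v] by (simp add: mult.commute)
qed

lemma pd_scale: "C1 F \<Longrightarrow> pd v (\<lambda>p. c * F p) = (\<lambda>p. c * pd v F p)"
  by (rule pd_eqI) (auto intro!: DERIV_cmult C1_deriv')

lemma pd_sum: "finite A \<Longrightarrow> (\<And>i. i \<in> A \<Longrightarrow> C1 (F i)) \<Longrightarrow> pd v (\<lambda>p. \<Sum>i\<in>A. F i p) = (\<lambda>p. \<Sum>i\<in>A. pd v (F i) p)"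
  by (rule pd_eqI) (auto intro!: DERIV_sum C1_deriv')

lemma pd_zero[simp]: "pd v (\<lambda>p. 0) = (\<lambda>p. 0)" using pd_const .


lemma dep_mono: "depends_only S F \<Longrightarrow> S \<subseteq> T \<Longrightarrow> depends_only T F"
  unfolding depends_only_def by blast

lemma dep_const: "depends_only S (\<lambda>p. c)"
  unfolding depends_only_def by blast

lemma dep_coord: "v \<in> S \<Longrightarrow> depends_only S (\<lambda>p. p v)"
  unfolding depends_only_def by blast

lemma dep_D: "depends_only S F \<Longrightarrow> \<forall>w\<in>S. p w = q w \<Longrightarrow> F p = F q"
  unfolding depends_only_def by blast

lemma dep_add: "depends_only S F \<Longrightarrow> depends_only S G \<Longrightarrow> depends_only S (\<lambda>p. F p + G p)"
  unfolding depends_only_def[of S "\<lambda>p. F p + G p"] by (metis dep_D)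

lemma dep_diff: "depends_only S F \<Longrightarrow> depends_only S G \<Longrightarrow> depends_only S (\<lambda>p. F p - G p)"
  unfolding depends_only_def[of S "\<lambda>p. F p - G p"] by (metis dep_D)

lemma dep_mult: "depends_only S F \<Longrightarrow> depends_only S G \<Longrightarrow> depends_only S (\<lambda>p. F p * G p)"
  unfolding depends_only_def[of S "\<lambda>p. F p * G p"] by (metis dep_D)

lemma dep_sum: "(\<And>i. i \<in> A \<Longrightarrow> depends_only S (F i)) \<Longrightarrow> depends_only S (\<lambda>p. \<Sum>i\<in>A. F i p)"
  unfolding depends_only_def[of S "\<lambda>p. \<Sum>i\<in>A. F i p"]
proof (intro allI impI)
  fix p q :: jpt assume "\<And>i. i \<in> A \<Longrightarrow> depends_only S (F i)" "\<forall>w\<in>S. p w = q w"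
  then have "\<And>i. i \<in> A \<Longrightarrow> F i p = F i q" using dep_D by blast
  then show "(\<Sum>i\<in>A. F i p) = (\<Sum>i\<in>A. F i q)" by (rule sum.cong[OF refl])
qed

lemma pd_indep:
  assumes "depends_only S F" "v \<notin> S"
  shows "pd v F = (\<lambda>p. 0)"
proof (rule pd_eqI)
  fix p
  have "(\<lambda>t. F (p(v:=t))) = (\<lambda>t. F p)"
  proof
    fix t show "F (p(v:=t)) = F p" by (rule dep_D[OF assms(1)]) (use assms(2) in auto)
  qed
  then show "((\<lambda>t. F (p(v:=t))) has_real_derivative 0) (at (p v))" by simp
qed

lemma dep_pd:
  assumes "depends_only S F"
  shows "depends_only S (pd v F)"
proof (cases "v \<in> S")
  case True
  show ?thesis unfolding depends_only_def
  proof (intro allI impI)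
    fix p q :: jpt assume pq: "\<forall>w\<in>S. p w = q w"
    have "(\<lambda>t. F (p(v:=t))) = (\<lambda>t. F (q(v:=t)))"
    proof
      fix t show "F (p(v:=t)) = F (q(v:=t))" by (rule dep_D[OF assms]) (use pq in auto)
    qed
    moreover have "p v = q v" using pq True by blast
    ultimately show "pd v F p = pd v F q" by (simp add: pd_def)
  qed
next
  case False
  then show ?thesis using pd_indep[OF assms False] dep_const by metis
qed

lemma dep_remove:
  assumes "depends_only S F" "C1 F" "pd v F = (\<lambda>p. 0)"
  shows "depends_only (S - {v}) F"
  unfolding depends_only_def
proof (intro allI impI)
  fix p q :: jpt assume pq: "\<forall>w\<in>S - {v}. p w = q w"
  have "\<forall>x. ((\<lambda>t. F (p(v:=t))) has_real_derivative 0) (at x)"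
    using C1_deriv[OF assms(2), of p v] assms(3) by simp
  then have "F (p(v:= p v)) = F (p(v:= q v))" by (rule DERIV_isconst_all)
  also have "F (p(v:= q v)) = F q"
    by (rule dep_D[OF assms(1)]) (use pq in auto)
  finally show "F p = F q" by simp
qed

lemma vars_upto_W[simp]: "W j r \<in> vars_upto m k \<longleftrightarrow> j < m \<and> r \<le> k"
  by (auto simp: vars_upto_def)

lemma vars_upto_X[simp]: "X \<in> vars_upto m k"
  by (auto simp: vars_upto_def)

lemma vars_upto_mono: "k \<le> k' \<Longrightarrow> vars_upto m k \<subseteq> vars_upto m k'"
  by (auto simp: vars_upto_def)

lemma vars_upto_remove: "vars_upto m (Suc k) - {W j (Suc k) | j. j < m} = vars_upto m k"
  by (auto simp: vars_upto_def)


definition sint :: "(real \<Rightarrow> real) \<Rightarrow> real \<Rightarrow> real" where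
  "sint \<psi> y = integral {0..y} \<psi> - integral {y..0} \<psi>"

lemma sint_alt:
  assumes c: "continuous_on UNIV \<psi>" and a: "a \<le> 0" "a \<le> y"
  shows "sint \<psi> y = integral {a..y} \<psi> - integral {a..0} \<psi>"
proof (cases "0 \<le> y")
  case True
  have "integral {a..0} \<psi> + integral {0..y} \<psi> = integral {a..y} \<psi>"
    by (rule Henstock_Kurzweil_Integration.integral_combine) (use a True in \<open>auto intro!: integrable_continuous_real continuous_on_subset[OF c]\<close>)
  moreover have "integral {y..0} \<psi> = 0"
    using True by (cases "y = 0") auto
  ultimately show ?thesis unfolding sint_def by simp
next
  case False
  have "integral {a..y} \<psi> + integral {y..0} \<psi> = integral {a..0} \<psi>"
    by (rule Henstock_Kurzweil_Integration.integral_combine) (use a False in \<open>auto intro!: integrable_continuous_real continuous_on_subset[OF c]\<close>)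
  moreover have "integral {0..y} \<psi> = 0"
    using False by simp
  ultimately show ?thesis unfolding sint_def by simp
qed

lemma sint_deriv:
  assumes c: "continuous_on UNIV \<psi>"
  shows "(sint \<psi> has_real_derivative \<psi> y) (at y)"
proof -
  define a where "a = min 0 y - 1"
  define b where "b = max 0 y + 1"
  have "((\<lambda>z. integral {a..z} \<psi>) has_real_derivative \<psi> y) (at y within {a..b})"
    by (rule integral_has_real_derivative) (auto simp: a_def b_def intro: continuous_on_subset[OF c])
  then have "((\<lambda>z. integral {a..z} \<psi>) has_real_derivative \<psi> y) (at y)"
    by (simp add: at_within_Icc_at a_def b_def)
  then have "((\<lambda>z. integral {a..z} \<psi> - integral {a..0} \<psi>) has_real_derivative \<psi> y - 0) (at y)"
    by (intro DERIV_diff) auto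
  then have "((\<lambda>z. integral {a..z} \<psi> - integral {a..0} \<psi>) has_real_derivative \<psi> y) (at y)"
    by simp
  then show ?thesis
  proof (rule has_field_derivative_transform_within_open[where S="{a<..}"])
    fix x assume "x \<in> {a<..}"
    then show "integral {a..x} \<psi> - integral {a..0} \<psi> = sint \<psi> x"
      using sint_alt[OF c, of a x] by (simp add: a_def)
  qed (auto simp: a_def)
qed

lemma sint_zero[simp]: "sint \<psi> 0 = 0"
  by (simp add: sint_def)

lemma sint_subst:
  assumes c: "continuous_on UNIV \<psi>"
  shows "integral {0..1} (\<lambda>t. y * \<psi> (t * y)) = sint \<psi> y"
proof -
  have ab: "\<bar>x * y\<bar> \<le> \<bar>y\<bar>" if "0 \<le> x" "x \<le> 1" for x
    using that by (simp add: abs_mult mult_left_le_one_le)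
  have ab2: "-\<bar>y\<bar> \<le> x * y \<and> x * y \<le> \<bar>y\<bar>" if "0 \<le> x" "x \<le> 1" for x
    using ab[OF that] by (simp add: abs_le_iff)
  have "((\<lambda>x. y *\<^sub>R \<psi> (x * y)) has_integral
        (integral {0 * y..1 * y} \<psi> - integral {1 * y..0 * y} \<psi>)) {0..1}"
    by (rule has_integral_substitution_general[where s="{}" and c="-\<bar>y\<bar>" and d="\<bar>y\<bar>"])
       (auto intro!: derivative_eq_intros continuous_on_subset[OF c] continuous_intros
             dest: ab2)
  then have "((\<lambda>x. y * \<psi> (x * y)) has_integral sint \<psi> y) {0..1}"
    by (simp add: sint_def)
  then show ?thesis by (simp only: mult.commute[of _ y]) (rule integral_unique)
qed

lemma cont_line: "continuous_on UNIV \<Psi> \<Longrightarrow> continuous_on UNIV (\<lambda>s. \<Psi> ((p::jpt)(v:=s)))"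
  by (rule continuous_on_compose2[OF _ cont_upd]) auto

definition J :: "jvar \<Rightarrow> (jpt \<Rightarrow> real) \<Rightarrow> jpt \<Rightarrow> real" where
  "J v \<Psi> p = sint (\<lambda>s. \<Psi> (p(v:=s))) (p v)"

lemma J_deriv_same:
  assumes "continuous_on UNIV \<Psi>"
  shows "((\<lambda>t. J v \<Psi> (p(v:=t))) has_real_derivative \<Psi> p) (at (p v))"
proof -
  have "(\<lambda>t. J v \<Psi> (p(v:=t))) = sint (\<lambda>s. \<Psi> (p(v:=s)))"
    by (simp add: J_def fun_eq_iff)
  moreover have "(sint (\<lambda>s. \<Psi> (p(v:=s))) has_real_derivative \<Psi> (p(v:= p v))) (at (p v))"
    by (rule sint_deriv[OF cont_line[OF assms]])
  ultimately show ?thesis by simp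
qed

lemma J_pd_same: "continuous_on UNIV \<Psi> \<Longrightarrow> pd v (J v \<Psi>) = \<Psi>"
  by (rule pd_eqI) (rule J_deriv_same)

lemma cont_fst_coord: "continuous_on S (\<lambda>z::jpt \<times> real. fst z i)"
  by (rule continuous_on_compose2[of UNIV "\<lambda>x::jpt. x i" S fst]) (auto intro: continuous_intros)

lemma J_cont:
  assumes c: "continuous_on UNIV \<Psi>"
  shows "continuous_on UNIV (J v \<Psi>)"
proof -
  have eq: "J v \<Psi> = (\<lambda>p. integral (cbox 0 1) (\<lambda>t. p v * \<Psi> (p(v := t * p v))))"
    by (simp add: fun_eq_iff J_def sint_subst[OF cont_line[OF c], symmetric])
  have m: "continuous_on UNIV (\<lambda>z::jpt \<times> real. (fst z)(v := snd z * fst z v))"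
    apply (rule continuous_on_coordinatewise_then_product)
    subgoal for i by (cases "i = v") (auto intro!: continuous_intros cont_fst_coord)
    done
  have "continuous_on (UNIV \<times> cbox 0 1) (\<lambda>(x::jpt, t::real). x v * \<Psi> (x(v := t * x v)))"
  proof -
    have "continuous_on UNIV (\<lambda>z::jpt \<times> real. fst z v * \<Psi> ((fst z)(v := snd z * fst z v)))"
      by (intro continuous_on_mult cont_fst_coord continuous_on_compose2[OF c m]) auto
    then show ?thesis by (auto simp: case_prod_beta intro: continuous_on_subset)
  qed
  from integral_continuous_on_param[OF this] show ?thesis unfolding eq .
qed

lemma cont_upd2: "continuous_on UNIV (\<lambda>z::real\<times>real. (p::jpt)(u := fst z, v := snd z))"
  apply (rule continuous_on_coordinatewise_then_product)
  subgoal for i by (cases "i = v"; cases "i = u") (auto intro!: continuous_intros)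
  done

lemma J_deriv_other:
  assumes C: "C1 \<Psi>" and cu: "continuous_on UNIV (pd u \<Psi>)" and uv: "u \<noteq> v"
  shows "((\<lambda>x. J v \<Psi> (p(u:=x))) has_real_derivative J v (pd u \<Psi>) p) (at (p u))"
proof -
  define f where "f = (\<lambda>x s. \<Psi> (p(u:=x, v:=s)))"
  define fx where "fx = (\<lambda>x s. pd u \<Psi> (p(u:=x, v:=s)))"
  have cfx: "continuous_on (UNIV \<times> cbox a b) (\<lambda>(x, t). fx x t)" for a b
  proof -
    have "continuous_on UNIV (\<lambda>z::real\<times>real. pd u \<Psi> (p(u := fst z, v := snd z)))"
      by (rule continuous_on_compose2[OF cu cont_upd2]) auto
    then show ?thesis by (auto simp: fx_def case_prod_beta intro: continuous_on_subset)
  qed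
  have der: "((\<lambda>x. f x t) has_field_derivative fx x t) (at x within UNIV)" for x t
  proof -
    have "((\<lambda>x. \<Psi> ((p(v:=t))(u:=x))) has_real_derivative pd u \<Psi> ((p(v:=t))(u:=x))) (at x)"
      by (rule C1_deriv[OF C])
    then show ?thesis using uv by (simp add: f_def fx_def fun_upd_twist)
  qed
  have int: "f x integrable_on cbox a b" for x a b
  proof -
    have "continuous_on UNIV (\<lambda>s. f x s)"
      unfolding f_def by (rule continuous_on_compose2[OF _ cont_upd]) (use C C1_def in auto)
    then show ?thesis
      by (simp add: integrable_continuous_real continuous_on_subset)
  qed
  have L: "((\<lambda>x. integral (cbox a b) (f x)) has_field_derivative integral (cbox a b) (fx (p u))) (at (p u))" for a b
    using leibniz_rule_field_derivative[OF der int cfx, of "p u" a b] by simp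
  have eq: "(\<lambda>x. J v \<Psi> (p(u:=x))) = (\<lambda>x. integral (cbox 0 (p v)) (f x) - integral (cbox (p v) 0) (f x))"
    using uv by (simp add: fun_eq_iff J_def sint_def f_def)
  have "((\<lambda>x. J v \<Psi> (p(u:=x))) has_real_derivative
        integral (cbox 0 (p v)) (fx (p u)) - integral (cbox (p v) 0) (fx (p u))) (at (p u))"
    unfolding eq by (intro DERIV_diff L)
  moreover have "integral (cbox 0 (p v)) (fx (p u)) - integral (cbox (p v) 0) (fx (p u)) = J v (pd u \<Psi>) p"
    by (simp add: J_def sint_def fx_def)
  ultimately show ?thesis by simp
qed

lemma J_pd_other:
  "C1 \<Psi> \<Longrightarrow> continuous_on UNIV (pd u \<Psi>) \<Longrightarrow> u \<noteq> v \<Longrightarrow> pd u (J v \<Psi>) = J v (pd u \<Psi>)"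
  by (rule pd_eqI) (rule J_deriv_other)

lemma J_dep:
  assumes "depends_only S \<Psi>" "v \<in> S"
  shows "depends_only S (J v \<Psi>)"
  unfolding depends_only_def
proof (intro allI impI)
  fix p q :: jpt assume pq: "\<forall>w\<in>S. p w = q w"
  have "(\<lambda>s. \<Psi> (p(v:=s))) = (\<lambda>s. \<Psi> (q(v:=s)))"
  proof
    fix s show "\<Psi> (p(v:=s)) = \<Psi> (q(v:=s))" by (rule dep_D[OF assms(1)]) (use pq in auto)
  qed
  moreover have "p v = q v" using pq assms(2) by blast
  ultimately show "J v \<Psi> p = J v \<Psi> q" by (simp add: J_def)
qed

lemma J_zero: "J v (\<lambda>p. 0) = (\<lambda>p. 0)"
  by (simp add: J_def sint_def fun_eq_iff)

lemma J_smooth: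
  assumes "smooth \<Psi>"
  shows "smooth (J v \<Psi>)"
proof (rule smooth_coind[where K="{J v G | G. smooth G} \<union> {G. smooth G}"])
  fix H assume "H \<in> {J v G | G. smooth G} \<union> {G. smooth G}"
  then show "C1 H"
  proof
    assume "H \<in> {J v G | G. smooth G}"
    then obtain G where G: "smooth G" "H = J v G" by blast
    have CG: "C1 G" "\<And>u. continuous_on UNIV (pd u G)"
      using G smooth_C1 smooth_pd C1_def by blast+
    show "C1 H" unfolding G
    proof (rule C1_intro[where D="\<lambda>u p. if u = v then G p else J v (pd u G) p"])
      show "continuous_on UNIV (J v G)" using CG C1_def J_cont by blast
      fix u p show "((\<lambda>t. J v G (p(u := t))) has_real_derivative (if u = v then G p else J v (pd u G) p)) (at (p u))"
        using J_deriv_same[of G v p] J_deriv_other[OF CG(1) CG(2), of u v p] CG(1) C1_def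
        by (cases "u = v") auto
    qed
  qed (auto intro: smooth_C1)
next
  fix H u assume "H \<in> {J v G | G. smooth G} \<union> {G. smooth G}"
  then show "pd u H \<in> {J v G | G. smooth G} \<union> {G. smooth G}"
  proof
    assume "H \<in> {J v G | G. smooth G}"
    then obtain G where G: "smooth G" "H = J v G" by blast
    have CG: "C1 G" "\<And>u. continuous_on UNIV (pd u G)"
      using G smooth_C1 smooth_pd C1_def by blast+
    show ?thesis
    proof (cases "u = v")
      case True then show ?thesis using G J_pd_same CG(1) C1_def by auto
    next
      case False then show ?thesis using G J_pd_other[OF CG(1) CG(2) False] smooth_pd by auto
    qed
  qed (auto intro: smooth_pd)
qed (use assms in auto)


lemma cont_updc: "continuous_on UNIV (\<lambda>p::jpt. p(v := c))"
  apply (rule continuous_on_coordinatewise_then_product)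
  subgoal for i by (cases "i = v") (auto intro: continuous_intros)
  done

lemma upd_deriv:
  assumes "C1 G"
  shows "((\<lambda>t. G ((p(u:=t))(v:=c))) has_real_derivative (if u = v then 0 else pd u G (p(v:=c)))) (at (p u))"
proof (cases "u = v")
  case True then show ?thesis by simp
next
  case False
  have "((\<lambda>t. G ((p(v:=c))(u:=t))) has_real_derivative pd u G ((p(v:=c))(u:= p u))) (at (p u))"
    by (rule C1_deriv[OF assms])
  moreover have "p(v:=c, u:=p u) = p(v:=c)" using False by (simp add: fun_eq_iff)
  ultimately show ?thesis using False by (simp add: fun_upd_twist)
qed

lemma pd_upd:
  assumes "C1 G"
  shows "pd u (\<lambda>p. G (p(v:=c))) = (if u = v then (\<lambda>p. 0) else (\<lambda>p. pd u G (p(v:=c))))"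
proof -
  have "pd u (\<lambda>p. G (p(v:=c))) = (\<lambda>p. if u = v then 0 else pd u G (p(v:=c)))"
    by (rule pd_eqI) (rule upd_deriv[OF assms])
  then show ?thesis by auto
qed

lemma upd_smooth:
  assumes "smooth G"
  shows "smooth (\<lambda>p. G (p(v:=c)))"
proof (rule smooth_coind[where K="{\<lambda>p. G (p(v:=c)) | G. smooth G}"])
  fix H assume "H \<in> {\<lambda>p. G (p(v:=c)) | G. smooth G}"
  then obtain G where G: "smooth G" "H = (\<lambda>p. G (p(v:=c)))" by blast
  then have CG: "C1 G" by (simp add: smooth_C1)
  show "C1 H" unfolding G(2)
  proof (rule C1_intro)
    show "continuous_on UNIV (\<lambda>p. G (p(v := c)))"
      by (rule continuous_on_compose2[OF _ cont_updc]) (use CG C1_def in auto)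
  qed (rule upd_deriv[OF CG])
next
  fix H u assume "H \<in> {\<lambda>p. G (p(v:=c)) | G. smooth G}"
  then obtain G where G: "smooth G" "H = (\<lambda>p. G (p(v:=c)))" by blast
  then have CG: "C1 G" by (simp add: smooth_C1)
  have "(\<lambda>p::jpt. 0::real) = (\<lambda>p. (\<lambda>q::jpt. 0::real) (p(v:=c)))" by simp
  then show "pd u H \<in> {\<lambda>p. G (p(v:=c)) | G. smooth G}"
    unfolding G(2) pd_upd[OF CG] using G(1) smooth_pd smooth_const by (cases "u = v") auto
qed (use assms in auto)

lemma ftc_rep:
  assumes C: "C1 F" and c: "continuous_on UNIV (pd v F)"
  shows "F p = F (p(v:=0)) + J v (pd v F) p"
proof -
  define \<phi> where "\<phi> = (\<lambda>t. F (p(v:=t)) - F (p(v:=0)) - sint (\<lambda>s. pd v F (p(v:=s))) t)"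
  have "\<forall>x. (\<phi> has_real_derivative 0) (at x)"
  proof
    fix x
    have "(\<phi> has_real_derivative pd v F (p(v:=x)) - 0 - pd v F (p(v:=x))) (at x)"
      unfolding \<phi>_def by (intro DERIV_diff C1_deriv[OF C] DERIV_const sint_deriv cont_line c)
    then show "(\<phi> has_real_derivative 0) (at x)" by simp
  qed
  then have "\<phi> (p v) = \<phi> 0" by (rule DERIV_isconst_all)
  then show ?thesis by (simp add: \<phi>_def J_def)
qed

lemma schwarz:
  assumes "smooth F"
  shows "pd u (pd v F) = pd v (pd u F)"
proof (cases "u = v")
  case True then show ?thesis by simp
next
  case False
  have sF: "smooth (pd v F)" "smooth (pd u F)" "smooth (pd u (pd v F))"
    using assms smooth_pd by blast+
  have cF: "C1 F" "C1 (pd v F)" "C1 (pd u F)" "C1 (pd u (pd v F))"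
    using sF assms smooth_C1 by blast+
  have eqF: "F = (\<lambda>p. F (p(v:=0)) + J v (pd v F) p)"
    using ftc_rep[OF cF(1)] cF(2) C1_def by blast
  have "pd u F = (\<lambda>p. pd u (\<lambda>p. F (p(v:=0))) p + pd u (J v (pd v F)) p)"
    by (subst eqF, rule pd_add) (auto intro!: smooth_C1 upd_smooth J_smooth sF assms)
  also have "\<dots> = (\<lambda>p. pd u F (p(v:=0)) + J v (pd u (pd v F)) p)"
    using False by (simp add: pd_upd[OF cF(1)] J_pd_other[OF cF(2)] cF(4)[unfolded C1_def])
  finally have eq2: "pd u F = (\<lambda>p. pd u F (p(v:=0)) + J v (pd u (pd v F)) p)" .
  have "pd v (pd u F) = (\<lambda>p. pd v (\<lambda>p. pd u F (p(v:=0))) p + pd v (J v (pd u (pd v F))) p)"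
    by (subst eq2, rule pd_add) (auto intro!: smooth_C1 upd_smooth J_smooth sF)
  also have "\<dots> = pd u (pd v F)"
    using cF(4) by (simp add: pd_upd[OF cF(3)] J_pd_same C1_def)
  finally show ?thesis by simp
qed


abbreviation fin :: "nat \<Rightarrow> nat \<Rightarrow> (jpt \<Rightarrow> real) \<Rightarrow> bool" where
  "fin m k F \<equiv> smooth F \<and> depends_only (vars_upto m k) F"

lemma pd_W_high: "depends_only (vars_upto m k) F \<Longrightarrow> \<not> (j < m \<and> r \<le> k) \<Longrightarrow> pd (W j r) F = (\<lambda>p. 0)"
  by (rule pd_indep) auto

lemma Dx_rep:
  assumes "depends_only (vars_upto m k) F"
  shows "Dx m F = (\<lambda>p. pd X F p + (\<Sum>j<m. \<Sum>r\<le>k. p (W j (Suc r)) * pd (W j r) F p))"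
proof
  fix p
  define g where "g = (\<lambda>jr::nat\<times>nat. if fst jr < m then p (W (fst jr) (Suc (snd jr))) * pd (W (fst jr) (snd jr)) F p else 0)"
  have "Sum_any g = sum g ({..<m} \<times> {..k})"
  proof (rule Sum_any.expand_superset)
    show "{a. g a \<noteq> 0} \<subseteq> {..<m} \<times> {..k}"
    proof
      fix a assume "a \<in> {a. g a \<noteq> 0}"
      then have "fst a < m" "pd (W (fst a) (snd a)) F p \<noteq> 0" by (auto simp: g_def split: if_splits)
      moreover have "snd a \<le> k"
      proof (rule ccontr)
        assume "\<not> snd a \<le> k"
        then have "pd (W (fst a) (snd a)) F = (\<lambda>p. 0)" using pd_W_high[OF assms] by auto
        then show False using \<open>pd (W (fst a) (snd a)) F p \<noteq> 0\<close> by simp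
      qed
      ultimately show "a \<in> {..<m} \<times> {..k}" by (cases a) auto
    qed
  qed auto
  also have "\<dots> = (\<Sum>(j,r)\<in>{..<m}\<times>{..k}. p (W j (Suc r)) * pd (W j r) F p)"
    by (rule sum.cong) (auto simp: g_def)
  also have "\<dots> = (\<Sum>j<m. \<Sum>r\<le>k. p (W j (Suc r)) * pd (W j r) F p)"
    by (rule sum.cartesian_product[symmetric])
  finally show "Dx m F p = pd X F p + (\<Sum>j<m. \<Sum>r\<le>k. p (W j (Suc r)) * pd (W j r) F p)"
    by (simp add: Dx_def g_def)
qed

lemma Dx_fin:
  assumes "fin m k F"
  shows "fin m (Suc k) (Dx m F)"
proof
  have sp: "smooth (pd v F)" for v using smooth_pd[OF conjunct1[OF assms]] .
  show "smooth (Dx m F)" unfolding Dx_rep[OF assms[THEN conjunct2]]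
    apply (rule smooth_add[OF sp])
    apply (rule smooth_sum, rule smooth_sum, rule smooth_mult[OF smooth_coord sp])
    done
  have dp: "depends_only (vars_upto m (Suc k)) (pd v F)" for v
    using dep_mono[OF dep_pd[OF conjunct2[OF assms]] vars_upto_mono[of k "Suc k" m]] by simp
  show "depends_only (vars_upto m (Suc k)) (Dx m F)" unfolding Dx_rep[OF assms[THEN conjunct2]]
    apply (rule dep_add[OF dp])
    apply (rule dep_sum, rule dep_sum, rule dep_mult[OF dep_coord dp])
    apply auto
    done
qed

lemma Dx_zero[simp]: "Dx m (\<lambda>p. 0) = (\<lambda>p. 0)"
proof -
  have "depends_only (vars_upto m 0) (\<lambda>p::jpt. 0::real)" by (rule dep_const)
  from Dx_rep[OF this] show ?thesis by simp
qed

lemma Dxp_zero[simp]: "(Dx m ^^ r) (\<lambda>p. 0) = (\<lambda>p. 0)"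
  by (induction r) auto

lemma Dxp_fin: "fin m k F \<Longrightarrow> fin m (k + r) ((Dx m ^^ r) F)"
proof (induction r)
  case (Suc r) then show ?case using Dx_fin[where m=m and k="k + r" and F="(Dx m ^^ r) F"] by simp
qed simp

lemma fin_mono: "fin m k F \<Longrightarrow> k \<le> k' \<Longrightarrow> fin m k' F"
  using dep_mono[OF _ vars_upto_mono[of k k' m], of F] by simp

lemma fin_pd: "fin m k F \<Longrightarrow> fin m k (pd v F)"
  using smooth_pd[of F v] dep_pd[of "vars_upto m k" F v] by simp

lemma Dx_add:
  assumes "fin m k F" "fin m k G"
  shows "Dx m (\<lambda>p. F p + G p) = (\<lambda>p. Dx m F p + Dx m G p)"
proof -
  have d: "depends_only (vars_upto m k) (\<lambda>p. F p + G p)" using dep_add[OF conjunct2[OF assms(1)] conjunct2[OF assms(2)]] .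
  have c: "C1 F" "C1 G" "\<And>v. C1 (pd v F)" "\<And>v. C1 (pd v G)"
    using smooth_C1[OF conjunct1[OF assms(1)]] smooth_C1[OF conjunct1[OF assms(2)]]
      smooth_C1[OF smooth_pd[OF conjunct1[OF assms(1)]]] smooth_C1[OF smooth_pd[OF conjunct1[OF assms(2)]]] by auto
  show ?thesis
    unfolding Dx_rep[OF d] Dx_rep[OF assms(1)[THEN conjunct2]] Dx_rep[OF assms(2)[THEN conjunct2]]
    by (simp add: pd_add c distrib_left sum.distrib add_ac)
qed

lemma Dx_diff:
  assumes "fin m k F" "fin m k G"
  shows "Dx m (\<lambda>p. F p - G p) = (\<lambda>p. Dx m F p - Dx m G p)"
proof -
  have d: "depends_only (vars_upto m k) (\<lambda>p. F p - G p)" using dep_diff[OF conjunct2[OF assms(1)] conjunct2[OF assms(2)]] .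
  have c: "C1 F" "C1 G" "\<And>v. C1 (pd v F)" "\<And>v. C1 (pd v G)"
    using smooth_C1[OF conjunct1[OF assms(1)]] smooth_C1[OF conjunct1[OF assms(2)]]
      smooth_C1[OF smooth_pd[OF conjunct1[OF assms(1)]]] smooth_C1[OF smooth_pd[OF conjunct1[OF assms(2)]]] by auto
  show ?thesis
    unfolding Dx_rep[OF d] Dx_rep[OF assms(1)[THEN conjunct2]] Dx_rep[OF assms(2)[THEN conjunct2]]
    apply (simp add: pd_diff c right_diff_distrib sum_subtractf)
    apply (rule ext)
    apply linarith
    done
qed

lemma Dx_scale:
  assumes "fin m k F"
  shows "Dx m (\<lambda>p. c * F p) = (\<lambda>p. c * Dx m F p)"
proof -
  have d: "depends_only (vars_upto m k) (\<lambda>p. c * F p)" using dep_mult[OF dep_const conjunct2[OF assms(1)]] .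
  have c: "C1 F" "\<And>v. C1 (pd v F)"
    using smooth_C1[OF conjunct1[OF assms(1)]] smooth_C1[OF smooth_pd[OF conjunct1[OF assms(1)]]] by auto
  show ?thesis
    unfolding Dx_rep[OF d] Dx_rep[OF assms(1)[THEN conjunct2]]
    by (simp add: pd_scale c distrib_left sum_distrib_left mult_ac)
qed

lemma Dxp_add:
  assumes "fin m k F" "fin m k G"
  shows "(Dx m ^^ r) (\<lambda>p. F p + G p) = (\<lambda>p. (Dx m ^^ r) F p + (Dx m ^^ r) G p)"
proof (induction r)
  case (Suc r)
  show ?case using Dx_add[OF Dxp_fin[OF assms(1), of r] Dxp_fin[OF assms(2), of r]] Suc by simp
qed simp

lemma Dxp_diff:
  assumes "fin m k F" "fin m k G"
  shows "(Dx m ^^ r) (\<lambda>p. F p - G p) = (\<lambda>p. (Dx m ^^ r) F p - (Dx m ^^ r) G p)"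
proof (induction r)
  case (Suc r)
  show ?case using Dx_diff[OF Dxp_fin[OF assms(1), of r] Dxp_fin[OF assms(2), of r]] Suc by simp
qed simp


lemma pd_Dx:
  assumes f: "fin m k F"
  shows "pd v (Dx m F) = (\<lambda>p. Dx m (pd v F) p +
           (\<Sum>j<m. \<Sum>r\<le>k. (if v = W j (Suc r) then 1 else 0) * pd (W j r) F p))"
proof -
  have sF: "smooth F" using f by simp
  have sp: "\<And>w. smooth (pd w F)" using smooth_pd[OF sF] .
  have cp: "\<And>w. C1 (pd w F)" using smooth_C1[OF sp] .
  have cpp: "\<And>w u. C1 (pd u (pd w F))" using smooth_C1[OF smooth_pd[OF sp]] .
  have cc: "\<And>w. C1 (\<lambda>p::jpt. p w)" using smooth_C1[OF smooth_coord] .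
  have cm: "\<And>j r. C1 (\<lambda>p. p (W j (Suc r)) * pd (W j r) F p)"
    using smooth_C1[OF smooth_mult[OF smooth_coord sp]] .
  have cs: "\<And>j. C1 (\<lambda>p. \<Sum>r\<le>k. p (W j (Suc r)) * pd (W j r) F p)"
    by (rule smooth_C1, rule smooth_sum, rule smooth_mult[OF smooth_coord sp])
  have css: "C1 (\<lambda>p. \<Sum>j<m. \<Sum>r\<le>k. p (W j (Suc r)) * pd (W j r) F p)"
    by (rule smooth_C1, rule smooth_sum, rule smooth_sum, rule smooth_mult[OF smooth_coord sp])
  have dF: "depends_only (vars_upto m k) F" using f by simp
  have dvF: "depends_only (vars_upto m k) (pd v F)" using dep_pd[OF dF] .
  have "pd v (Dx m F) = pd v (\<lambda>p. pd X F p + (\<Sum>j<m. \<Sum>r\<le>k. p (W j (Suc r)) * pd (W j r) F p))"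
    by (simp only: Dx_rep[OF dF])
  also have "\<dots> = (\<lambda>p. pd v (pd X F) p + pd v (\<lambda>p. \<Sum>j<m. \<Sum>r\<le>k. p (W j (Suc r)) * pd (W j r) F p) p)"
    by (rule pd_add[OF cp css])
  also have "pd v (\<lambda>p. \<Sum>j<m. \<Sum>r\<le>k. p (W j (Suc r)) * pd (W j r) F p)
      = (\<lambda>p. \<Sum>j<m. pd v (\<lambda>p. \<Sum>r\<le>k. p (W j (Suc r)) * pd (W j r) F p) p)"
    by (rule pd_sum) (auto intro: cs)
  also have "(\<lambda>p. \<Sum>j<m. pd v (\<lambda>p. \<Sum>r\<le>k. p (W j (Suc r)) * pd (W j r) F p) p)
      = (\<lambda>p. \<Sum>j<m. \<Sum>r\<le>k. pd v (\<lambda>p. p (W j (Suc r)) * pd (W j r) F p) p)"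
    by (subst pd_sum) (auto intro: cm)
  also have "(\<lambda>p. \<Sum>j<m. \<Sum>r\<le>k. pd v (\<lambda>p. p (W j (Suc r)) * pd (W j r) F p) p)
      = (\<lambda>p. \<Sum>j<m. \<Sum>r\<le>k. (if v = W j (Suc r) then 1 else 0) * pd (W j r) F p
                 + p (W j (Suc r)) * pd (W j r) (pd v F) p)"
    by (simp add: pd_mult[OF cc cp] pd_coord schwarz[OF sF])
  finally have "pd v (Dx m F) = (\<lambda>p. pd X (pd v F) p + (\<Sum>j<m. \<Sum>r\<le>k. (if v = W j (Suc r) then 1 else 0) * pd (W j r) F p
                 + p (W j (Suc r)) * pd (W j r) (pd v F) p))"
    by (simp add: schwarz[OF sF])
  then show ?thesis
    by (simp add: Dx_rep[OF dvF] sum.distrib add_ac)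
qed

lemma pd_X_Dx: assumes f: "fin m k F" shows "pd X (Dx m F) = Dx m (pd X F)"
  by (simp add: pd_Dx[OF f])

lemma sum_delta_mult: "finite A \<Longrightarrow> (\<Sum>r\<in>A. (if a = r then 1 else 0) * c r) = (if a \<in> A then c a else (0::real))"
  by (induction A rule: finite_induct) auto

lemma pd_W_Dx:
  assumes f: "fin m k F" and i: "i < m"
  shows "pd (W i s) (Dx m F) = (\<lambda>p. Dx m (pd (W i s) F) p + (if 0 < s then pd (W i (s - 1)) F p else 0))"
proof -
  have "(\<Sum>j<m. \<Sum>r\<le>k. (if W i s = W j (Suc r) then 1 else 0) * pd (W j r) F p)
        = (if 0 < s then pd (W i (s - 1)) F p else 0)" for p
  proof (cases s)
    case 0 then show ?thesis by simp
  next
    case (Suc s')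
    have inner: "(\<Sum>r\<le>k. (if W i s = W j (Suc r) then 1 else 0) * pd (W j r) F p)
        = (if i = j then 1 else 0) * (if s' \<le> k then pd (W i s') F p else 0)" for j
    proof (cases "i = j")
      case True
      have "(\<Sum>r\<le>k. (if W i s = W j (Suc r) then 1 else 0) * pd (W j r) F p)
          = (\<Sum>r\<le>k. (if s' = r then 1 else 0) * pd (W i r) F p)"
        by (rule sum.cong) (auto simp: Suc True)
      also have "\<dots> = (if s' \<le> k then pd (W i s') F p else 0)"
        by (subst sum_delta_mult) auto
      finally show ?thesis using True by simp
    qed (simp add: Suc)
    have "(\<Sum>j<m. \<Sum>r\<le>k. (if W i s = W j (Suc r) then 1 else 0) * pd (W j r) F p)
        = (\<Sum>j<m. (if i = j then 1 else 0) * (if s' \<le> k then pd (W i s') F p else 0))"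
      by (simp only: inner)
    also have "\<dots> = (if s' \<le> k then pd (W i s') F p else 0)"
      using i by (subst sum_delta_mult) auto
    also have "\<dots> = pd (W i s') F p"
      using pd_W_high[of m k F i s'] f by auto
    finally show ?thesis by (simp add: Suc)
  qed
  then show ?thesis by (simp add: pd_Dx[OF f])
qed

lemma euler_rep:
  assumes "depends_only (vars_upto m k) F"
  shows "euler m j F = (\<lambda>p. \<Sum>r\<le>k. (-1)^r * (Dx m ^^ r) (pd (W j r) F) p)"
proof
  fix p
  have "Sum_any (\<lambda>r. (-1) ^ r * (Dx m ^^ r) (pd (W j r) F) p) = (\<Sum>r\<le>k. (-1)^r * (Dx m ^^ r) (pd (W j r) F) p)"
  proof (rule Sum_any.expand_superset)
    show "{a. (-1) ^ a * (Dx m ^^ a) (pd (W j a) F) p \<noteq> 0} \<subseteq> {..k}"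
    proof
      fix r assume r: "r \<in> {a. (-1) ^ a * (Dx m ^^ a) (pd (W j a) F) p \<noteq> (0::real)}"
      show "r \<in> {..k}"
      proof (rule ccontr)
        assume "r \<notin> {..k}"
        then have "pd (W j r) F = (\<lambda>p. 0)" using pd_W_high[OF assms, of j r] by auto
        then show False using r by simp
      qed
    qed
  qed auto
  then show "euler m j F p = (\<Sum>r\<le>k. (-1)^r * (Dx m ^^ r) (pd (W j r) F) p)"
    by (simp add: euler_def)
qed

lemma euler_diff:
  assumes f: "fin m k F" and g: "fin m k G"
  shows "euler m j (\<lambda>p. F p - G p) = (\<lambda>p. euler m j F p - euler m j G p)"
proof -
  have d: "depends_only (vars_upto m k) (\<lambda>p. F p - G p)"
    using dep_diff[OF conjunct2[OF f] conjunct2[OF g]] .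
  have cF: "C1 F" using smooth_C1[OF conjunct1[OF f]] .
  have cG: "C1 G" using smooth_C1[OF conjunct1[OF g]] .
  have e: "(Dx m ^^ r) (pd (W j r) (\<lambda>p. F p - G p)) = (\<lambda>p. (Dx m ^^ r) (pd (W j r) F) p - (Dx m ^^ r) (pd (W j r) G) p)" for r
    unfolding pd_diff[OF cF cG] by (rule Dxp_diff[OF fin_pd[OF f] fin_pd[OF g]])
  show ?thesis
    unfolding euler_rep[OF d] euler_rep[OF conjunct2[OF f]] euler_rep[OF conjunct2[OF g]] e
    by (simp add: right_diff_distrib sum_subtractf)
qed

lemma funpow_Dx_Suc: "(Dx m ^^ n) (Dx m F) = (Dx m ^^ Suc n) F"
  by (simp add: funpow_swap1)

lemma euler_Dx:
  assumes c: "fin m k C" and j: "j < m"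
  shows "euler m j (Dx m C) = (\<lambda>p. 0)"
proof
  fix p
  have dD: "depends_only (vars_upto m (Suc k)) (Dx m C)" using conjunct2[OF Dx_fin[OF c]] .
  define b where "b r = (Dx m ^^ Suc r) (pd (W j r) C) p" for r
  define t where "t r = (-1::real)^r * b r" for r
  have fp: "fin m k (pd v C)" for v using fin_pd[OF c] .
  have fDp: "fin m (Suc k) (Dx m (pd v C))" for v using Dx_fin[OF fp] .
  have term0: "(Dx m ^^ 0) (pd (W j 0) (Dx m C)) p = b 0"
    by (simp add: pd_W_Dx[OF c j] b_def)
  have termS: "(Dx m ^^ Suc r) (pd (W j (Suc r)) (Dx m C)) p = b (Suc r) + b r" for r
  proof -
    have e: "pd (W j (Suc r)) (Dx m C) = (\<lambda>p. Dx m (pd (W j (Suc r)) C) p + pd (W j r) C p)"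
      by (simp add: pd_W_Dx[OF c j])
    have "(Dx m ^^ Suc r) (pd (W j (Suc r)) (Dx m C))
       = (\<lambda>p. (Dx m ^^ Suc r) (Dx m (pd (W j (Suc r)) C)) p + (Dx m ^^ Suc r) (pd (W j r) C) p)"
      unfolding e by (rule Dxp_add[OF fDp fin_mono[OF fp, of "Suc k"]]) simp
    then show ?thesis by (simp only: b_def funpow_Dx_Suc)
  qed
  have bk: "b (Suc k) = 0"
    using pd_W_high[OF conjunct2[OF c], of j "Suc k"] by (simp add: b_def)
  have "euler m j (Dx m C) p = (\<Sum>r\<le>Suc k. (-1)^r * (Dx m ^^ r) (pd (W j r) (Dx m C)) p)"
    by (simp add: euler_rep[OF dD])
  also have "\<dots> = t 0 + (\<Sum>r\<le>k. (-1)^(Suc r) * (b (Suc r) + b r))"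
    by (simp only: sum.atMost_Suc_shift term0 termS) (simp add: t_def)
  also have "\<dots> = t 0 + (\<Sum>r\<le>k. t (Suc r) - t r)"
    by (intro arg_cong2[where f="(+)"] refl sum.cong) (simp_all add: t_def algebra_simps)
  also have "\<dots> = t 0 + (\<Sum>r\<le>k. t (Suc r)) - (\<Sum>r\<le>k. t r)"
    by (simp add: sum_subtractf)
  also have "\<dots> = (\<Sum>r\<le>Suc k. t r) - (\<Sum>r\<le>k. t r)"
    by (simp only: sum.atMost_Suc_shift)
  also have "\<dots> = t (Suc k)" by simp
  also have "\<dots> = 0" by (simp add: t_def bk)
  finally show "euler m j (Dx m C) p = 0" .
qed


lemma Dxp_high:
  assumes "fin m q H" "q + r < s"
  shows "pd (W i s) ((Dx m ^^ r) H) = (\<lambda>p. 0)"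
  using pd_W_high[OF conjunct2[OF Dxp_fin[OF assms(1), of r]], of i s] assms(2) by simp

lemma Dxp_lead:
  assumes f: "fin m q H" and i: "i < m"
  shows "pd (W i (q + r)) ((Dx m ^^ r) H) = pd (W i q) H"
proof (induction r)
  case 0 then show ?case by simp
next
  case (Suc r)
  have fr: "fin m (q + r) ((Dx m ^^ r) H)" using Dxp_fin[OF f] .
  have z: "pd (W i (Suc (q + r))) ((Dx m ^^ r) H) = (\<lambda>p. 0)"
    by (rule Dxp_high[OF f]) simp
  have "pd (W i (q + Suc r)) ((Dx m ^^ Suc r) H) = pd (W i (Suc (q + r))) (Dx m ((Dx m ^^ r) H))"
    by simp
  also have "\<dots> = pd (W i (q + r)) ((Dx m ^^ r) H)"
    by (simp add: pd_W_Dx[OF fr i] z)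
  finally show ?case using Suc by simp
qed

lemma layer_remove:
  assumes s: "smooth G" and d: "depends_only (vars_upto m (Suc k)) G"
    and z: "\<forall>j<m. pd (W j (Suc k)) G = (\<lambda>p. 0)"
  shows "depends_only (vars_upto m k) G"
proof -
  have L: "n \<le> m \<Longrightarrow> depends_only (vars_upto m k \<union> {W j (Suc k) | j. n \<le> j \<and> j < m}) G" for n
  proof (induction n)
    case 0
    have "vars_upto m k \<union> {W j (Suc k) | j. 0 \<le> j \<and> j < m} = vars_upto m (Suc k)"
      by (auto simp: vars_upto_def le_Suc_eq)
    then show ?case using d by simp
  next
    case (Suc n)
    then have IH: "depends_only (vars_upto m k \<union> {W j (Suc k) | j. n \<le> j \<and> j < m}) G" by simp
    have "depends_only ((vars_upto m k \<union> {W j (Suc k) | j. n \<le> j \<and> j < m}) - {W n (Suc k)}) G"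
      by (rule dep_remove[OF IH smooth_C1[OF s]]) (use z Suc.prems in auto)
    moreover have "(vars_upto m k \<union> {W j (Suc k) | j. n \<le> j \<and> j < m}) - {W n (Suc k)}
        = vars_upto m k \<union> {W j (Suc k) | j. Suc n \<le> j \<and> j < m}"
      by (auto simp: vars_upto_def)
    ultimately show ?case by simp
  qed
  have eq: "vars_upto m k \<union> {W j (Suc k) | j. m \<le> j \<and> j < m} = vars_upto m k" by auto
  have "depends_only (vars_upto m k \<union> {W j (Suc k) | j. m \<le> j \<and> j < m}) G" by (rule L) simp
  then show ?thesis unfolding eq .
qed

lemma poincare:
  assumes B: "\<forall>l<m. fin m k (B l)"
    and sym: "\<forall>i<m. \<forall>l<m. pd (W i k) (B l) = pd (W l k) (B i)"
  shows "n \<le> m \<Longrightarrow> \<exists>C. fin m k C \<and> (\<forall>l<n. pd (W l k) C = B l)"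
proof (induction n)
  case 0
  have "fin m k (\<lambda>p. 0)" using dep_const by simp
  then show ?case by (intro exI[of _ "\<lambda>p. 0"]) simp
next
  case (Suc n)
  then obtain C where C: "fin m k C" and CB: "\<forall>l<n. pd (W l k) C = B l" by auto
  have n: "n < m" using Suc.prems by simp
  have Bn: "fin m k (B n)" using B n by simp
  define D where "D = (\<lambda>p. B n p - pd (W n k) C p)"
  have fD: "fin m k D" unfolding D_def
    using smooth_minus[OF conjunct1[OF Bn] smooth_pd[OF conjunct1[OF C]]]
      dep_diff[OF conjunct2[OF Bn] dep_pd[OF conjunct2[OF C]]] by simp
  define C' where "C' = (\<lambda>p. C p + J (W n k) D p)"
  have sJ: "smooth (J (W n k) D)" using J_smooth[OF conjunct1[OF fD]] .
  have fC': "fin m k C'" unfolding C'_def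
    using smooth_add[OF conjunct1[OF C] sJ] dep_add[OF conjunct2[OF C] J_dep[OF conjunct2[OF fD]]] n by simp
  have cD: "C1 D" using smooth_C1[OF conjunct1[OF fD]] .
  have contD: "continuous_on UNIV (pd u D)" for u
    using smooth_C1[OF smooth_pd[OF conjunct1[OF fD]]] unfolding C1_def by (rule conjunct1)
  have pdC': "pd (W l k) C' = (\<lambda>p. pd (W l k) C p + pd (W l k) (J (W n k) D) p)" for l
    unfolding C'_def by (rule pd_add[OF smooth_C1[OF conjunct1[OF C]] smooth_C1[OF sJ]])
  have "\<forall>l<Suc n. pd (W l k) C' = B l"
  proof (intro allI impI)
    fix l assume l: "l < Suc n"
    show "pd (W l k) C' = B l"
    proof (cases "l = n")
      case True
      have "pd (W n k) (J (W n k) D) = D" by (rule J_pd_same) (use cD[unfolded C1_def] in simp)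
      then show ?thesis using True by (simp add: pdC' D_def)
    next
      case False
      then have ln: "l < n" using l by simp
      have sC: "smooth C" using C by simp
      have "pd (W l k) D = (\<lambda>p. pd (W l k) (B n) p - pd (W l k) (pd (W n k) C) p)"
        unfolding D_def by (rule pd_diff[OF smooth_C1[OF conjunct1[OF Bn]] smooth_C1[OF smooth_pd[OF sC]]])
      also have "\<dots> = (\<lambda>p. pd (W n k) (B l) p - pd (W n k) (pd (W l k) C) p)"
        using sym n ln schwarz[OF sC, of "W l k" "W n k"] by simp
      also have "\<dots> = (\<lambda>p. 0)" using CB ln by simp
      finally have z: "pd (W l k) D = (\<lambda>p. 0)" .
      have "pd (W l k) (J (W n k) D) = J (W n k) (pd (W l k) D)"
        by (rule J_pd_other[OF cD contD]) (use False in simp)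
      then have "pd (W l k) (J (W n k) D) = (\<lambda>p. 0)" by (simp add: z J_zero)
      then show ?thesis by (simp add: pdC' CB ln)
    qed
  qed
  then show ?case using fC' by (intro exI[of _ C']) simp
qed


lemma pd_euler:
  assumes f: "fin m K f"
  shows "pd v (euler m j f) = (\<lambda>p. \<Sum>r\<le>K. (-1)^r * pd v ((Dx m ^^ r) (pd (W j r) f)) p)"
proof -
  have s: "\<And>r. smooth ((Dx m ^^ r) (pd (W j r) f))"
    using conjunct1[OF Dxp_fin[OF fin_pd[OF f]]] .
  have "pd v (euler m j f) = pd v (\<lambda>p. \<Sum>r\<le>K. (-1)^r * (Dx m ^^ r) (pd (W j r) f) p)"
    by (simp only: euler_rep[OF conjunct2[OF f]])
  also have "\<dots> = (\<lambda>p. \<Sum>r\<le>K. pd v (\<lambda>p. (-1)^r * (Dx m ^^ r) (pd (W j r) f) p) p)"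
    by (rule pd_sum) (auto intro: smooth_C1 smooth_scale s)
  also have "\<dots> = (\<lambda>p. \<Sum>r\<le>K. (-1)^r * pd v ((Dx m ^^ r) (pd (W j r) f)) p)"
    by (simp add: pd_scale smooth_C1[OF s])
  finally show ?thesis .
qed

lemma sum_last_only: "(\<And>r. r \<le> n \<Longrightarrow> g r = (0::real)) \<Longrightarrow> (\<Sum>r\<le>Suc n. g r) = g (Suc n)"
  by simp

lemma sum_last_two: "(\<And>r. r \<le> n \<Longrightarrow> g r = (0::real)) \<Longrightarrow> (\<Sum>r\<le>Suc (Suc n). g r) = g (Suc n) + g (Suc (Suc n))"
  by simp

lemma step:
  assumes e: "\<forall>j<m. depends_only (vars_upto m 2) (e j)"
    and f: "fin m (Suc (Suc k)) f" and el: "\<forall>j<m. euler m j f = e j"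
  shows "\<exists>f'. fin m (Suc k) f' \<and> (\<forall>j<m. euler m j f' = e j)"
proof -
  define K where "K = Suc (Suc k)"
  define B where "B j = pd (W j K) f" for j
  have fK: "fin m K f" using f K_def by simp
  have sf: "smooth f" using f by simp
  have fpf: "\<And>v. fin m K (pd v f)" using fin_pd[OF fK] .
  have zero_e: "pd (W j' s) (euler m j f) = (\<lambda>p. 0)" if "j < m" "2 < s" for j j' s
    using el e pd_W_high[of m 2 "e j" j' s] that by simp
  have a: "pd (W j' K) (B j) = (\<lambda>p. 0)" if j: "j < m" and j': "j' < m" for j j'
  proof
    fix p
    have "0 = pd (W j' (K + K)) (euler m j f) p" using zero_e[OF j, of "K + K"] K_def by simp
    also have "\<dots> = (\<Sum>r\<le>K. (-1)^r * pd (W j' (K + K)) ((Dx m ^^ r) (pd (W j r) f)) p)"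
      by (simp add: pd_euler[OF fK])
    also have "\<dots> = (-1)^K * pd (W j' (K + K)) ((Dx m ^^ K) (pd (W j K) f)) p"
      unfolding K_def
      by (rule sum_last_only) (simp add: Dxp_high[OF fpf[unfolded K_def]])
    also have "\<dots> = (-1)^K * pd (W j' K) (B j) p"
      by (simp add: Dxp_lead[OF fpf j'] B_def)
    finally show "pd (W j' K) (B j) p = 0" by simp
  qed
  have fB: "fin m (Suc k) (B j)" if j: "j < m" for j
  proof -
    have sB: "smooth (B j)" unfolding B_def using smooth_pd[OF sf] .
    have "depends_only (vars_upto m (Suc k)) (B j)"
      by (rule layer_remove[OF sB]) (use fpf[of "W j K"] a[OF j] K_def B_def in auto)
    then show ?thesis using sB by simp
  qed
  have sym: "pd (W i (Suc k)) (B l) = pd (W l (Suc k)) (B i)" if i: "i < m" and l: "l < m" for i l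
  proof
    fix p
    have "0 = pd (W l (K + Suc k)) (euler m i f) p" using zero_e[OF i, of "K + Suc k"] K_def by simp
    also have "\<dots> = (\<Sum>r\<le>K. (-1)^r * pd (W l (K + Suc k)) ((Dx m ^^ r) (pd (W i r) f)) p)"
      by (simp add: pd_euler[OF fK])
    also have "\<dots> = (-1)^(Suc k) * pd (W l (K + Suc k)) ((Dx m ^^ Suc k) (pd (W i (Suc k)) f)) p
                   + (-1)^K * pd (W l (K + Suc k)) ((Dx m ^^ K) (pd (W i K) f)) p"
      unfolding K_def
      by (rule sum_last_two) (simp add: Dxp_high[OF fpf[unfolded K_def]])
    also have "pd (W l (K + Suc k)) ((Dx m ^^ Suc k) (pd (W i (Suc k)) f)) = pd (W l K) (pd (W i (Suc k)) f)"
      by (rule Dxp_lead[OF fpf l])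
    also have "pd (W l (K + Suc k)) ((Dx m ^^ K) (pd (W i K) f)) = pd (W l (Suc k)) (B i)"
      using Dxp_lead[OF fB[OF i] l, of K] by (simp add: B_def add.commute)
    finally have "pd (W l K) (pd (W i (Suc k)) f) p = pd (W l (Suc k)) (B i) p"
      by (simp add: K_def)
    moreover have "pd (W l K) (pd (W i (Suc k)) f) = pd (W i (Suc k)) (B l)"
      by (simp add: B_def schwarz[OF sf])
    ultimately show "pd (W i (Suc k)) (B l) p = pd (W l (Suc k)) (B i) p" by simp
  qed
  obtain C where C: "fin m (Suc k) C" and CB: "\<forall>l<m. pd (W l (Suc k)) C = B l"
    using poincare[where m=m and k="Suc k" and B=B and n=m] fB sym by auto
  define f' where "f' = (\<lambda>p. f p - Dx m C p)"
  have fDC: "fin m K (Dx m C)" using Dx_fin[OF C] K_def by simp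
  have ff': "fin m K f'" unfolding f'_def
    using smooth_minus[OF sf conjunct1[OF fDC]] dep_diff[OF conjunct2[OF fK] conjunct2[OF fDC]] by simp
  have z: "pd (W j K) f' = (\<lambda>p. 0)" if j: "j < m" for j
  proof -
    have "pd (W j K) f' = (\<lambda>p. pd (W j K) f p - pd (W j K) (Dx m C) p)"
      unfolding f'_def by (rule pd_diff[OF smooth_C1[OF sf] smooth_C1[OF conjunct1[OF fDC]]])
    moreover have "pd (W j K) (Dx m C) = (\<lambda>p. Dx m (pd (W j K) C) p + pd (W j (Suc k)) C p)"
      using pd_W_Dx[OF C j, of K] K_def by simp
    moreover have "pd (W j K) C = (\<lambda>p. 0)"
      using pd_W_high[OF conjunct2[OF C], of j K] K_def by simp
    ultimately show ?thesis using CB j by (simp add: B_def)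
  qed
  have df': "depends_only (vars_upto m (Suc k)) f'"
    by (rule layer_remove[OF conjunct1[OF ff']]) (use ff' z K_def in auto)
  have "euler m j f' = e j" if j: "j < m" for j
  proof -
    have "euler m j f' = (\<lambda>p. euler m j f p - euler m j (Dx m C) p)"
      unfolding f'_def by (rule euler_diff[OF fK fDC])
    then show ?thesis using euler_Dx[OF C j] el j by simp
  qed
  then show ?thesis using ff' df' by (intro exI[of _ f']) simp
qed

lemma reduce:
  assumes e: "\<forall>j<m. depends_only (vars_upto m 2) (e j)"
  shows "fin m K f \<Longrightarrow> (\<forall>j<m. euler m j f = e j) \<Longrightarrow> \<exists>g. fin m 1 g \<and> (\<forall>j<m. euler m j g = e j)"
proof (induction K arbitrary: f rule: less_induct)
  case (less K)
  show ?case
  proof (cases "K \<le> 1")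
    case True
    then show ?thesis using fin_mono[OF less.prems(1) True] less.prems(2) by (intro exI[of _ f]) simp
  next
    case False
    then obtain k where K: "K = Suc (Suc k)" by (metis Suc_le_mono le0 not0_implies_Suc not_less_eq_eq One_nat_def)
    obtain f' where f': "fin m (Suc k) f'" "\<forall>j<m. euler m j f' = e j"
      using step[OF e less.prems(1)[unfolded K] less.prems(2)] by blast
    show ?thesis using less.IH[of "Suc k" f'] f' K by simp
  qed
qed


lemma sum_le1: "(\<Sum>r\<le>(1::nat). g r) = g 0 + (g 1 :: real)"
  by (simp add: atMost_Suc)

theorem theorem4p2:
  fixes m :: nat and e :: "nat \<Rightarrow> jpt \<Rightarrow> real"
  assumes e_smooth: "\<forall>j<m. smooth (e j) \<and> depends_only (vars_upto m 2) (e j)"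
    and exists_f: "\<exists>f. lagrange m f \<and> (\<forall>j<m. euler m j f = e j)"
  shows "(\<exists>F FF.
            (\<forall>j<m. smooth (F j) \<and> depends_only (vars_upto m 1) (F j)) \<and>
            (\<forall>j<m. \<forall>j'<m. smooth (FF j j') \<and> depends_only (vars_upto m 1) (FF j j')
                            \<and> FF j j' = FF j' j) \<and>
            (\<forall>j<m. \<forall>p. e j p = F j p - (\<Sum>j'<m. FF j j' p * p (W j' 2))))
         \<and> (\<exists>g. smooth g \<and> depends_only (vars_upto m 1) g \<and> (\<forall>j<m. euler m j g = e j))"
proof -
  have ed: "\<forall>j<m. depends_only (vars_upto m 2) (e j)" using e_smooth by simp
  obtain f k where f: "fin m k f" and ef: "\<forall>j<m. euler m j f = e j"
    using exists_f unfolding lagrange_def by blast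
  obtain g where g: "fin m 1 g" and eg: "\<forall>j<m. euler m j g = e j"
    using reduce[OF ed f ef] by blast
  have sg: "smooth g" and dg: "depends_only (vars_upto m 1) g" using g by simp_all
  define FF where "FF j j' = pd (W j' 1) (pd (W j 1) g)" for j j'
  define F where "F j = (\<lambda>p. pd (W j 0) g p - pd X (pd (W j 1) g) p
      - (\<Sum>j'<m. p (W j' 1) * pd (W j' 0) (pd (W j 1) g) p))" for j
  have spg: "\<And>v. smooth (pd v g)" using smooth_pd[OF sg] .
  have dpg: "\<And>v. depends_only (vars_upto m 1) (pd v g)" using dep_pd[OF dg] .
  have sF: "smooth (F j)" for j unfolding F_def
    by (intro smooth_minus spg smooth_pd smooth_sum smooth_mult[OF smooth_coord])
  have dF: "depends_only (vars_upto m 1) (F j)" for j unfolding F_def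
    apply (intro dep_diff dpg dep_pd dep_sum)
    apply (rule dep_mult[OF dep_coord dep_pd[OF dpg]])
    apply auto
    done
  have FFp: "smooth (FF j j') \<and> depends_only (vars_upto m 1) (FF j j') \<and> FF j j' = FF j' j" for j j'
    unfolding FF_def using smooth_pd[OF spg] dep_pd[OF dpg] schwarz[OF sg] by simp
  have eq: "e j p = F j p - (\<Sum>j'<m. FF j j' p * p (W j' 2))" if j: "j < m" for j p
  proof -
    have fH: "depends_only (vars_upto m 1) (pd (W j 1) g)" using dpg .
    have "e j p = euler m j g p" using eg j by simp
    also have "\<dots> = pd (W j 0) g p - Dx m (pd (W j 1) g) p"
      by (simp add: euler_rep[OF dg] sum_le1)
    also have "Dx m (pd (W j 1) g) p = pd X (pd (W j 1) g) p
        + (\<Sum>j'<m. p (W j' 1) * pd (W j' 0) (pd (W j 1) g) p + p (W j' 2) * pd (W j' 1) (pd (W j 1) g) p)"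
      unfolding Dx_rep[OF fH] by (simp add: sum_le1 numeral_2_eq_2)
    finally show ?thesis
      by (simp add: F_def FF_def sum.distrib algebra_simps)
  qed
  show ?thesis
  proof (intro conjI)
    show "\<exists>F FF.
            (\<forall>j<m. smooth (F j) \<and> depends_only (vars_upto m 1) (F j)) \<and>
            (\<forall>j<m. \<forall>j'<m. smooth (FF j j') \<and> depends_only (vars_upto m 1) (FF j j')
                            \<and> FF j j' = FF j' j) \<and>
            (\<forall>j<m. \<forall>p. e j p = F j p - (\<Sum>j'<m. FF j j' p * p (W j' 2)))"
      using sF dF FFp eq by (intro exI[of _ F] exI[of _ FF]) simp
    show "\<exists>g. smooth g \<and> depends_only (vars_upto m 1) g \<and> (\<forall>j<m. euler m j g = e j)"
      using sg dg eg by (intro exI[of _ g]) simp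
  qed
qed


end
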